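(* Let $(G,\delta)$ be a nilpotent $\mathbb Q$-scalable group of step $s$ that is generated as a group by $\{\delta_q(x_i):q\in\mathbb Q,1\le i\le r\}$ for some $x_1,\dots,x_r\in V_1(G)$. Then $G^{(s)}$, equipped with the $\mathbb Q$-vector space structure $\sigma$ (where $\sigma_q=\delta_q$ if $s=1$ and $\sigma_{n/m}(z)=\delta_m^{-1}(z^{nm^{s-1}})$ for $n\in\mathbb Z,m\in\mathbb N$ if $s\ge2$), is finite dimensional.
   Context: A $\mathbb Q$-scalable group is a group $G$ with a map $\delta\colon\mathbb Q\times G\to G$ such that $\delta_\lambda$ is an automorphism for $\lambda\ne0$, $\delta_\lambda\circ\delta_\mu=\delta_{\lambda\mu}$, and $\delta_0\equiv e_G$. $V_1(G):=\{p:\delta_{t+s}(p)=\delta_t(p)\delta_s(p)\ \forall t,s\in\mathbb Q\}$. $[g,h]=ghg^{-1}h^{-1}$; $G^{(1)}=G$, $G^{(k)}=\langle[G,G^{(k-1)}]\rangle$; step $s$ means $G^{(s+1)}=\{e\}\ne G^{(s)}$. The map $\sigma$ above is known to make the abelian group $G^{(s)}$ a $\mathbb Q$-vector space. *)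

theory Defs
  imports "HOL-Algebra.Algebra"
begin

definition Q_scalable :: "('a, 'b) monoid_scheme \<Rightarrow> (rat \<Rightarrow> 'a \<Rightarrow> 'a) \<Rightarrow> bool" where
  "Q_scalable G \<delta> \<longleftrightarrow> group G
     \<and> (\<forall>l. l \<noteq> 0 \<longrightarrow> \<delta> l \<in> iso G G)
     \<and> (\<forall>l m. \<forall>x\<in>carrier G. \<delta> l (\<delta> m x) = \<delta> (l * m) x)
     \<and> (\<forall>x\<in>carrier G. \<delta> 0 x = \<one>\<^bsub>G\<^esub>)"

definition V1 :: "('a, 'b) monoid_scheme \<Rightarrow> (rat \<Rightarrow> 'a \<Rightarrow> 'a) \<Rightarrow> 'a set" where
  "V1 G \<delta> = {p \<in> carrier G. \<forall>t s. \<delta> (t + s) p = \<delta> t p \<otimes>\<^bsub>G\<^esub> \<delta> s p}"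

definition gcomm :: "('a, 'b) monoid_scheme \<Rightarrow> 'a \<Rightarrow> 'a \<Rightarrow> 'a" where
  "gcomm G g h = g \<otimes>\<^bsub>G\<^esub> h \<otimes>\<^bsub>G\<^esub> inv\<^bsub>G\<^esub> g \<otimes>\<^bsub>G\<^esub> inv\<^bsub>G\<^esub> h"

text \<open>Lower central series, indexed as in the paper: lcs G 1 = G,
  lcs G (k+1) = <[G, lcs G k]>.  (lcs G 0 is set to G as a harmless convention.)\<close>
fun lcs :: "('a, 'b) monoid_scheme \<Rightarrow> nat \<Rightarrow> 'a set" where
  "lcs G 0 = carrier G"
| "lcs G (Suc 0) = carrier G"
| "lcs G (Suc (Suc k)) =
     generate G {gcomm G g h | g h. g \<in> carrier G \<and> h \<in> lcs G (Suc k)}"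

definition nilpotent_step :: "('a, 'b) monoid_scheme \<Rightarrow> nat \<Rightarrow> bool" where
  "nilpotent_step G s \<longleftrightarrow> s \<ge> 1 \<and> lcs G (s + 1) = {\<one>\<^bsub>G\<^esub>} \<and> lcs G s \<noteq> {\<one>\<^bsub>G\<^esub>}"

definition sigma :: "('a, 'b) monoid_scheme \<Rightarrow> (rat \<Rightarrow> 'a \<Rightarrow> 'a) \<Rightarrow> nat \<Rightarrow> rat \<Rightarrow> 'a \<Rightarrow> 'a" where
  "sigma G \<delta> s q z =
     (if s = 1 then \<delta> q z
      else (case quotient_of q of (n, m) \<Rightarrow>
              \<delta> (1 / of_int m) (z [^]\<^bsub>G\<^esub> (n * m ^ (s - 1)))))"

text \<open>Finite dimensionality of the Q-vector space (lcs G s, group operation, sigma):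
  some finite subset B of lcs G s spans it, i.e. every element is a finite
  linear combination  sigma_{q_1} b_1 * ... * sigma_{q_k} b_k  with b_i in B.\<close>
definition finite_dim_sigma :: "('a, 'b) monoid_scheme \<Rightarrow> (rat \<Rightarrow> 'a \<Rightarrow> 'a) \<Rightarrow> nat \<Rightarrow> bool" where
  "finite_dim_sigma G \<delta> s \<longleftrightarrow>
     (\<exists>B. finite B \<and> B \<subseteq> lcs G s \<and>
        (\<forall>z\<in>lcs G s. \<exists>l :: (rat \<times> 'a) list. snd ` set l \<subseteq> B \<and>
            z = foldr (\<lambda>(q, b) acc. sigma G \<delta> s q b \<otimes>\<^bsub>G\<^esub> acc) l \<one>\<^bsub>G\<^esub>))"

end

theory Submission imports Defs begin

fun ic :: "('a, 'b) monoid_scheme \<Rightarrow> 'a list \<Rightarrow> 'a" where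
  "ic G [] = \<one>\<^bsub>G\<^esub>"
| "ic G [g] = g"
| "ic G (g # h # t) = gcomm G g (ic G (h # t))"

context group begin

lemma cancel_l1 [simp]: "x \<in> carrier G \<Longrightarrow> y \<in> carrier G \<Longrightarrow> x \<otimes> (inv x \<otimes> y) = y"
  by (simp add: m_assoc[symmetric])
lemma cancel_l2 [simp]: "x \<in> carrier G \<Longrightarrow> y \<in> carrier G \<Longrightarrow> inv x \<otimes> (x \<otimes> y) = y"
  by (simp add: m_assoc[symmetric])

lemma gcomm_closed [simp]: "g \<in> carrier G \<Longrightarrow> h \<in> carrier G \<Longrightarrow> gcomm G g h \<in> carrier G"
  by (simp add: gcomm_def)

lemma I1: "a \<in> carrier G \<Longrightarrow> g \<in> carrier G \<Longrightarrow> h \<in> carrier G \<Longrightarrow>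
  gcomm G (a \<otimes> g) h = a \<otimes> gcomm G g h \<otimes> inv a \<otimes> gcomm G a h"
  by (simp add: gcomm_def m_assoc inv_mult_group)

lemma I2: "g \<in> carrier G \<Longrightarrow> h1 \<in> carrier G \<Longrightarrow> h2 \<in> carrier G \<Longrightarrow>
  gcomm G g (h1 \<otimes> h2) = gcomm G g h1 \<otimes> (h1 \<otimes> gcomm G g h2 \<otimes> inv h1)"
  by (simp add: gcomm_def m_assoc inv_mult_group)

lemma I3: "a \<in> carrier G \<Longrightarrow> w \<in> carrier G \<Longrightarrow> a \<otimes> w \<otimes> inv a = gcomm G a w \<otimes> w"
  by (simp add: gcomm_def m_assoc inv_mult_group)

lemma I4: "g \<in> carrier G \<Longrightarrow> h \<in> carrier G \<Longrightarrow> gcomm G g (inv h) = inv h \<otimes> inv (gcomm G g h) \<otimes> h"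
  by (simp add: gcomm_def m_assoc inv_mult_group)

lemma I5 [simp]: "h \<in> carrier G \<Longrightarrow> gcomm G h \<one> = \<one>" "h \<in> carrier G \<Longrightarrow> gcomm G \<one> h = \<one>"
  by (simp_all add: gcomm_def)

lemma I6: "x \<in> carrier G \<Longrightarrow> y \<in> carrier G \<Longrightarrow> x \<otimes> y = gcomm G x y \<otimes> y \<otimes> x"
  by (simp add: gcomm_def m_assoc inv_mult_group)

lemma I7: "a \<in> carrier G \<Longrightarrow> g \<in> carrier G \<Longrightarrow> h \<in> carrier G \<Longrightarrow>
  a \<otimes> gcomm G g h \<otimes> inv a = gcomm G (a \<otimes> g) h \<otimes> inv (gcomm G a h)"
  by (simp add: gcomm_def m_assoc inv_mult_group)



lemma lcs_SS: "lcs G (Suc (Suc k)) = generate G {gcomm G g h | g h. g \<in> carrier G \<and> h \<in> lcs G (Suc k)}"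
  by simp

lemma lcs_subgroup: "subgroup (lcs G k) G"
proof (induction k)
  case 0 then show ?case by (simp add: subgroup_self)
next
  case (Suc k)
  show ?case
  proof (cases k)
    case 0 then show ?thesis by (simp add: subgroup_self)
  next
    case (Suc k')
    have "{gcomm G g h | g h. g \<in> carrier G \<and> h \<in> lcs G k} \<subseteq> carrier G"
      using subgroup.subset[OF Suc.IH] by auto
    then show ?thesis using Suc generate_is_subgroup by simp
  qed
qed

lemma lcs_carrier: "lcs G k \<subseteq> carrier G"
  by (rule subgroup.subset[OF lcs_subgroup])

lemma lcs_carrierD [simp]: "x \<in> lcs G k \<Longrightarrow> x \<in> carrier G"
  using lcs_carrier[of k] by (rule subsetD)

lemma lcs_one [simp]: "\<one> \<in> lcs G k"
  by (rule subgroup.one_closed[OF lcs_subgroup])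

lemma lcs_mult [simp]: "x \<in> lcs G k \<Longrightarrow> y \<in> lcs G k \<Longrightarrow> x \<otimes> y \<in> lcs G k"
  by (rule subgroup.m_closed[OF lcs_subgroup])

lemma lcs_inv [simp]: "x \<in> lcs G k \<Longrightarrow> inv x \<in> lcs G k"
  by (rule subgroup.m_inv_closed[OF lcs_subgroup])

lemma lcs_comm: assumes "g \<in> carrier G" "h \<in> lcs G k" shows "gcomm G g h \<in> lcs G (Suc k)"
proof (cases k)
  case 0 then show ?thesis using assms by simp
next
  case (Suc k')
  then show ?thesis using assms by (auto intro: generate.incl)
qed

lemma generate_conj:
  assumes "A \<subseteq> carrier G" "\<And>a w. a \<in> carrier G \<Longrightarrow> w \<in> A \<Longrightarrow> a \<otimes> w \<otimes> inv a \<in> generate G A"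
    and "a \<in> carrier G" "x \<in> generate G A"
  shows "a \<otimes> x \<otimes> inv a \<in> generate G A"
  using assms(4)
proof (induction x rule: generate.induct)
  case one then show ?case using assms(3) by (simp add: generate.one)
next
  case (incl h) then show ?case using assms by blast
next
  case (inv h)
  have hc: "h \<in> carrier G" using inv assms(1) by blast
  have "a \<otimes> inv h \<otimes> inv a = inv (a \<otimes> h \<otimes> inv a)"
    using hc assms(3) by (simp add: m_assoc inv_mult_group)
  have "subgroup (generate G A) G" using assms(1) by (rule generate_is_subgroup)
  then show ?case using assms(2)[OF assms(3) inv] \<open>a \<otimes> inv h \<otimes> inv a = _\<close>
    by (simp add: subgroup.m_inv_closed)
next
  case (eng h1 h2)
  have c: "h1 \<in> carrier G" "h2 \<in> carrier G" using eng generate_in_carrier assms(1) by blast+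
  have "a \<otimes> (h1 \<otimes> h2) \<otimes> inv a = (a \<otimes> h1 \<otimes> inv a) \<otimes> (a \<otimes> h2 \<otimes> inv a)"
    using c assms(3) by (simp add: m_assoc)
  then show ?case using generate.eng[OF eng.IH] by simp
qed

lemma lcs_conj: assumes a: "a \<in> carrier G" "w \<in> lcs G k" shows "a \<otimes> w \<otimes> inv a \<in> lcs G k"
proof (cases k)
  case 0 then show ?thesis using a
    by simp
next
  case (Suc k')
  show ?thesis
  proof (cases k')
    case 0 then show ?thesis using a Suc by simp
  next
    case (Suc k'')
    let ?A = "{gcomm G g h | g h. g \<in> carrier G \<and> h \<in> lcs G (Suc k'')}"
    have A: "?A \<subseteq> carrier G" by (auto intro!: gcomm_closed)
    have conjA: "a \<otimes> y \<otimes> inv a \<in> generate G ?A" if ay: "a \<in> carrier G" "y \<in> ?A" for a y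
    proof -
      obtain g h where y: "y = gcomm G g h" "g \<in> carrier G" "h \<in> lcs G (Suc k'')" using ay by blast
      have e: "a \<otimes> y \<otimes> inv a = gcomm G (a \<otimes> g) h \<otimes> inv (gcomm G a h)"
        unfolding y(1) by (rule I7) (use y ay in auto)
      have hc: "h \<in> carrier G" using y(3) by (rule lcs_carrierD)
      have ag: "a \<otimes> g \<in> carrier G" using y ay by simp
      have 1: "gcomm G (a \<otimes> g) h \<in> generate G ?A" apply (rule generate.incl) using ag y(3) by blast
      have 2: "inv (gcomm G a h) \<in> generate G ?A" apply (rule generate.inv) using ay(1) y(3) by blast
      show ?thesis unfolding e by (rule generate.eng[OF 1 2])
    qed
    have wA: "w \<in> generate G ?A" using a(2) Suc \<open>k = Suc k'\<close> by simp
    have "a \<otimes> w \<otimes> inv a \<in> generate G ?A" by (rule generate_conj[OF A conjA a(1) wA])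
    then show ?thesis using Suc \<open>k = Suc k'\<close> by simp
  qed
qed

lemma lcs_mono_Suc: "lcs G (Suc k) \<subseteq> lcs G k"
proof (cases k)
  case 0 then show ?thesis by simp
next
  case (Suc k')
  have "lcs G (Suc (Suc k')) \<subseteq> lcs G (Suc k')"
    unfolding lcs_SS
  proof (rule generate_subgroup_incl[OF _ lcs_subgroup])
    show "{gcomm G g h | g h. g \<in> carrier G \<and> h \<in> lcs G (Suc k')} \<subseteq> lcs G (Suc k')"
    proof clarify
      fix g h assume gh: "g \<in> carrier G" "h \<in> lcs G (Suc k')"
      have "gcomm G g h = (g \<otimes> h \<otimes> inv g) \<otimes> inv h" by (simp add: gcomm_def)
      then show "gcomm G g h \<in> lcs G (Suc k')" using lcs_conj gh by simp
    qed
  qed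
  then show ?thesis using Suc by simp
qed

lemma lcs_mono: "k \<le> l \<Longrightarrow> lcs G l \<subseteq> lcs G k"
  by (induction l rule: dec_induct) (use lcs_mono_Suc in auto)


declare lcs.simps(3)[simp del]

lemma lcs_SSS_sub: "lcs G (Suc k) \<subseteq> lcs G k" by (rule lcs_mono_Suc)

definition cmod :: "'a set \<Rightarrow> 'a \<Rightarrow> 'a \<Rightarrow> bool" where
  "cmod N a b \<longleftrightarrow> a \<in> carrier G \<and> b \<in> carrier G \<and> a \<otimes> inv b \<in> N"

lemma cm_refl: "a \<in> carrier G \<Longrightarrow> cmod (lcs G m) a a"
  by (simp add: cmod_def)

lemma cm_sym: assumes "cmod (lcs G m) a b" shows "cmod (lcs G m) b a"
proof -
  have c: "a \<in> carrier G" "b \<in> carrier G" and n: "a \<otimes> inv b \<in> lcs G m" using assms by (auto simp: cmod_def)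
  have "b \<otimes> inv a = inv (a \<otimes> inv b)" using c by (simp add: inv_mult_group)
  then show ?thesis using c lcs_inv[OF n] by (simp add: cmod_def)
qed

lemma cm_trans: assumes "cmod (lcs G m) a b" "cmod (lcs G m) b c" shows "cmod (lcs G m) a c"
proof -
  have c: "a \<in> carrier G" "b \<in> carrier G" "c \<in> carrier G" and n: "a \<otimes> inv b \<in> lcs G m" "b \<otimes> inv c \<in> lcs G m"
    using assms by (auto simp: cmod_def)
  have "a \<otimes> inv c = (a \<otimes> inv b) \<otimes> (b \<otimes> inv c)" using c by (simp add: m_assoc)
  then show ?thesis using c lcs_mult[OF n] by (simp add: cmod_def)
qed

lemma cm_mult: assumes "cmod (lcs G m) a a'" "cmod (lcs G m) b b'" shows "cmod (lcs G m) (a \<otimes> b) (a' \<otimes> b')"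
proof -
  have c: "a \<in> carrier G" "a' \<in> carrier G" "b \<in> carrier G" "b' \<in> carrier G"
    and n: "a \<otimes> inv a' \<in> lcs G m" "b \<otimes> inv b' \<in> lcs G m"
    using assms by (auto simp: cmod_def)
  have "(a \<otimes> b) \<otimes> inv (a' \<otimes> b') = (a \<otimes> (b \<otimes> inv b') \<otimes> inv a) \<otimes> (a \<otimes> inv a')"
    using c by (simp add: m_assoc inv_mult_group)
  moreover have "a \<otimes> (b \<otimes> inv b') \<otimes> inv a \<in> lcs G m" using lcs_conj[OF c(1) n(2)] .
  ultimately show ?thesis using c lcs_mult n(1) by (simp add: cmod_def)
qed

lemma cm_n: assumes "n \<in> lcs G m" "a \<in> carrier G" shows "cmod (lcs G m) (n \<otimes> a) a"
proof -
  have nc: "n \<in> carrier G" using assms(1) by (rule lcs_carrierD)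
  have "n \<otimes> a \<otimes> inv a = n" using nc assms(2) by (simp add: m_assoc)
  then show ?thesis using assms nc by (simp add: cmod_def)
qed

lemma cm_one: assumes "lcs G m = {\<one>}" "cmod (lcs G m) a b" shows "a = b"
proof -
  have c: "a \<in> carrier G" "b \<in> carrier G" and n: "a \<otimes> inv b = \<one>" using assms by (auto simp: cmod_def)
  have "a = a \<otimes> inv b \<otimes> b" using c by (simp add: m_assoc)
  then show ?thesis using n c by simp
qed

lemma C1: assumes "x \<in> lcs G j" "y \<in> lcs G j" shows "cmod (lcs G (Suc j)) (x \<otimes> y) (y \<otimes> x)"
proof -
  have c: "x \<in> carrier G" "y \<in> carrier G" using assms by simp_all
  have "x \<otimes> y = gcomm G x y \<otimes> (y \<otimes> x)" using I6[OF c] c by (simp add: m_assoc)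
  moreover have "gcomm G x y \<in> lcs G (Suc j)" using lcs_comm c(1) assms(2) by blast
  ultimately show ?thesis using cm_n c by simp
qed

lemma C2: assumes "a \<in> carrier G" "x \<in> lcs G j" shows "cmod (lcs G (Suc j)) (a \<otimes> x \<otimes> inv a) x"
proof -
  have c: "x \<in> carrier G" using assms by simp
  have "a \<otimes> x \<otimes> inv a = gcomm G a x \<otimes> x" using I3[OF assms(1) c] .
  moreover have "gcomm G a x \<in> lcs G (Suc j)" using lcs_comm assms by blast
  ultimately show ?thesis using cm_n c by simp
qed

lemma C3: assumes "g1 \<in> carrier G" "g2 \<in> carrier G" "h \<in> lcs G j"
  shows "cmod (lcs G (Suc (Suc j))) (gcomm G (g1 \<otimes> g2) h) (gcomm G g1 h \<otimes> gcomm G g2 h)"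
proof -
  have hc: "h \<in> carrier G" using assms by simp
  have c1: "gcomm G g1 h \<in> lcs G (Suc j)" and c2: "gcomm G g2 h \<in> lcs G (Suc j)"
    using lcs_comm assms by blast+
  have e: "gcomm G (g1 \<otimes> g2) h = (g1 \<otimes> gcomm G g2 h \<otimes> inv g1) \<otimes> gcomm G g1 h"
    using I1[OF assms(1,2) hc] .
  have "cmod (lcs G (Suc (Suc j))) ((g1 \<otimes> gcomm G g2 h \<otimes> inv g1) \<otimes> gcomm G g1 h) (gcomm G g2 h \<otimes> gcomm G g1 h)"
    by (rule cm_mult[OF C2[OF assms(1) c2] cm_refl]) (use c1 in simp)
  moreover have "cmod (lcs G (Suc (Suc j))) (gcomm G g2 h \<otimes> gcomm G g1 h) (gcomm G g1 h \<otimes> gcomm G g2 h)"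
    by (rule C1[OF c2 c1])
  ultimately show ?thesis unfolding e by (rule cm_trans)
qed

lemma C4: assumes "g \<in> carrier G" "h1 \<in> lcs G j" "h2 \<in> lcs G j"
  shows "cmod (lcs G (Suc (Suc j))) (gcomm G g (h1 \<otimes> h2)) (gcomm G g h1 \<otimes> gcomm G g h2)"
proof -
  have hc: "h1 \<in> carrier G" "h2 \<in> carrier G" using assms by simp_all
  have c1: "gcomm G g h1 \<in> lcs G (Suc j)" and c2: "gcomm G g h2 \<in> lcs G (Suc j)"
    using lcs_comm assms by blast+
  have e: "gcomm G g (h1 \<otimes> h2) = gcomm G g h1 \<otimes> (h1 \<otimes> gcomm G g h2 \<otimes> inv h1)"
    using I2[OF assms(1) hc] .
  show ?thesis unfolding e
    by (rule cm_mult[OF cm_refl C2[OF hc(1) c2]]) (use c1 in simp)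
qed

lemma C5: assumes "g \<in> carrier G" "h \<in> lcs G j" "h' \<in> lcs G j" "cmod (lcs G (Suc j)) h h'"
  shows "cmod (lcs G (Suc (Suc j))) (gcomm G g h) (gcomm G g h')"
proof -
  have hc: "h \<in> carrier G" "h' \<in> carrier G" using assms by simp_all
  define n where "n = h \<otimes> inv h'"
  have n: "n \<in> lcs G (Suc j)" using assms(4) by (simp add: cmod_def n_def)
  have nc: "n \<in> carrier G" using n by simp
  have hn: "h = n \<otimes> h'" using hc by (simp add: n_def m_assoc)
  have c2: "gcomm G g h' \<in> lcs G (Suc j)" using lcs_comm assms by blast
  have gn: "gcomm G g n \<in> lcs G (Suc (Suc j))" using lcs_comm assms(1) n by blast
  have e: "gcomm G g h = gcomm G g n \<otimes> (n \<otimes> gcomm G g h' \<otimes> inv n)"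
    unfolding hn using I2[OF assms(1) nc hc(2)] .
  have "cmod (lcs G (Suc (Suc j))) (gcomm G g n \<otimes> (n \<otimes> gcomm G g h' \<otimes> inv n)) (n \<otimes> gcomm G g h' \<otimes> inv n)"
    by (rule cm_n[OF gn]) (use nc c2 in simp)
  moreover have "cmod (lcs G (Suc (Suc j))) (n \<otimes> gcomm G g h' \<otimes> inv n) (gcomm G g h')"
    by (rule C2[OF nc c2])
  ultimately show ?thesis unfolding e by (rule cm_trans)
qed


lemma ic_Cons: "gs \<noteq> [] \<Longrightarrow> ic G (g # gs) = gcomm G g (ic G gs)"
  by (cases gs) auto

lemma ic_lcs: "set gs \<subseteq> carrier G \<Longrightarrow> ic G gs \<in> lcs G (length gs)"
proof (induction gs)
  case Nil then show ?case by simp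
next
  case (Cons g gs)
  show ?case
  proof (cases gs)
    case Nil then show ?thesis using Cons by simp
  next
    case (Cons h t)
    have "ic G gs \<in> lcs G (length gs)" using Cons.IH Cons.prems by simp
    moreover have "g \<in> carrier G" using Cons.prems by simp
    ultimately show ?thesis using lcs_comm ic_Cons[of gs g] \<open>gs = h # t\<close> by fastforce
  qed
qed

lemma ic_closed: "set gs \<subseteq> carrier G \<Longrightarrow> ic G gs \<in> carrier G"
  using ic_lcs lcs_carrierD by blast

lemma M: assumes "set us \<subseteq> carrier G" "set vs \<subseteq> carrier G" "a \<in> carrier G" "b \<in> carrier G"
  shows "cmod (lcs G (Suc (length us + Suc (length vs)))) (ic G (us @ (a \<otimes> b) # vs)) (ic G (us @ a # vs) \<otimes> ic G (us @ b # vs))"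
  using assms(1)
proof (induction us)
  case Nil
  show ?case
  proof (cases vs)
    case Nil then show ?thesis using assms by (simp add: cm_refl)
  next
    case (Cons v vs')
    have h: "ic G vs \<in> lcs G (length vs)" using ic_lcs assms(2) by blast
    have "cmod (lcs G (Suc (Suc (length vs)))) (gcomm G (a \<otimes> b) (ic G vs)) (gcomm G a (ic G vs) \<otimes> gcomm G b (ic G vs))"
      by (rule C3[OF assms(3,4) h])
    then show ?thesis using Cons ic_Cons[of vs] by simp
  qed
next
  case (Cons u us)
  let ?L = "\<lambda>x. us @ x # vs"
  have uc: "u \<in> carrier G" and usc: "set us \<subseteq> carrier G" using Cons.prems by auto
  have IH: "cmod (lcs G (Suc (length us + Suc (length vs)))) (ic G (?L (a \<otimes> b))) (ic G (?L a) \<otimes> ic G (?L b))"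
    using Cons.IH usc by blast
  have l: "ic G (?L x) \<in> lcs G (length us + Suc (length vs))" if "x \<in> carrier G" for x
    using ic_lcs[of "?L x"] usc assms(2) that by simp
  have la: "ic G (?L (a \<otimes> b)) \<in> lcs G (length us + Suc (length vs))" using l assms by simp
  have lb: "ic G (?L a) \<otimes> ic G (?L b) \<in> lcs G (length us + Suc (length vs))" using l assms lcs_mult by simp
  have 1: "cmod (lcs G (Suc (Suc (length us + Suc (length vs))))) (gcomm G u (ic G (?L (a \<otimes> b)))) (gcomm G u (ic G (?L a) \<otimes> ic G (?L b)))"
    by (rule C5[OF uc la lb IH])
  have 2: "cmod (lcs G (Suc (Suc (length us + Suc (length vs))))) (gcomm G u (ic G (?L a) \<otimes> ic G (?L b))) (gcomm G u (ic G (?L a)) \<otimes> gcomm G u (ic G (?L b)))"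
    by (rule C4[OF uc l l]) (use assms in simp_all)
  have "cmod (lcs G (Suc (Suc (length us + Suc (length vs))))) (gcomm G u (ic G (?L (a \<otimes> b)))) (gcomm G u (ic G (?L a)) \<otimes> gcomm G u (ic G (?L b)))"
    by (rule cm_trans[OF 1 2])
  then show ?case by (simp add: ic_Cons)
qed

lemma M_top: assumes "lcs G (Suc (length us + Suc (length vs))) = {\<one>}"
  "set us \<subseteq> carrier G" "set vs \<subseteq> carrier G" "a \<in> carrier G" "b \<in> carrier G"
  shows "ic G (us @ (a \<otimes> b) # vs) = ic G (us @ a # vs) \<otimes> ic G (us @ b # vs)"
  by (rule cm_one[OF assms(1) M[OF assms(2-5)]])


definition Wk :: "'a set \<Rightarrow> nat \<Rightarrow> 'a set" where
  "Wk Xs k = {ic G gs | gs. length gs = k \<and> set gs \<subseteq> Xs}"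

lemma L1_step:
  assumes X: "Xs \<subseteq> carrier G" "generate G Xs = carrier G" "\<And>x. x \<in> Xs \<Longrightarrow> inv x \<in> Xs"
    and IH: "lcs G (Suc k) \<subseteq> generate G (Wk Xs (Suc k) \<union> lcs G (Suc (Suc k)))"
  shows "lcs G (Suc (Suc k)) \<subseteq> generate G (Wk Xs (Suc (Suc k)) \<union> lcs G (Suc (Suc (Suc k))))"
proof -
  let ?H = "generate G (Wk Xs (Suc (Suc k)) \<union> lcs G (Suc (Suc (Suc k))))"
  have W_sub: "Wk Xs (Suc (Suc k)) \<subseteq> lcs G (Suc (Suc k))"
  proof
    fix w assume "w \<in> Wk Xs (Suc (Suc k))"
    then obtain gs where "w = ic G gs" "length gs = Suc (Suc k)" "set gs \<subseteq> Xs" by (auto simp: Wk_def)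
    then show "w \<in> lcs G (Suc (Suc k))" using ic_lcs[of gs] X(1) by auto
  qed
  have Hsub: "?H \<subseteq> lcs G (Suc (Suc k))"
    by (rule generate_subgroup_incl[OF _ lcs_subgroup]) (use W_sub lcs_mono_Suc in blast)
  have Hsg: "subgroup ?H G"
    by (rule generate_is_subgroup) (use W_sub lcs_carrier in blast)
  have Hc: "x \<in> ?H \<Longrightarrow> x \<in> carrier G" for x using Hsub lcs_carrierD by blast
  have Hm: "x \<in> ?H \<Longrightarrow> y \<in> ?H \<Longrightarrow> x \<otimes> y \<in> ?H" for x y using subgroup.m_closed[OF Hsg] by blast
  have Hi: "x \<in> ?H \<Longrightarrow> inv x \<in> ?H" for x using subgroup.m_inv_closed[OF Hsg] by blast
  have Hl: "x \<in> lcs G (Suc (Suc (Suc k))) \<Longrightarrow> x \<in> ?H" for x by (rule generate.incl) blast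
  have HW: "x \<in> Wk Xs (Suc (Suc k)) \<Longrightarrow> x \<in> ?H" for x by (rule generate.incl) blast
  have Hconj: "a \<otimes> w \<otimes> inv a \<in> ?H" if "a \<in> carrier G" "w \<in> ?H" for a w
  proof -
    have wl: "w \<in> lcs G (Suc (Suc k))" using Hsub that by blast
    have wc: "w \<in> carrier G" using wl by simp
    have "a \<otimes> w \<otimes> inv a = gcomm G a w \<otimes> w" by (rule I3[OF that(1) wc])
    moreover have "gcomm G a w \<in> ?H" by (rule Hl[OF lcs_comm[OF that(1) wl]])
    ultimately show ?thesis using Hm that(2) by simp
  qed
  have incl_case: "gcomm G g h \<in> ?H" if g: "g \<in> carrier G" and h: "h \<in> Wk Xs (Suc k) \<union> lcs G (Suc (Suc k))" for g h
  proof (cases "h \<in> lcs G (Suc (Suc k))")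
    case True then show ?thesis using Hl lcs_comm g by blast
  next
    case False
    then have "h \<in> Wk Xs (Suc k)" using h by blast
    then obtain gs where gs: "h = ic G gs" "length gs = Suc k" "set gs \<subseteq> Xs" by (auto simp: Wk_def)
    have hc: "h \<in> carrier G" using gs ic_closed X(1) by blast
    have gsne: "gs \<noteq> []" using gs by auto
    have base: "gcomm G x h \<in> ?H" if "x \<in> Xs" for x
    proof -
      have "gcomm G x h = ic G (x # gs)" using gs(1) ic_Cons[OF gsne] by simp
      moreover have "ic G (x # gs) \<in> Wk Xs (Suc (Suc k))" unfolding Wk_def using gs that by (auto intro!: exI[of _ "x # gs"])
      ultimately show ?thesis using HW by simp
    qed
    have "g \<in> generate G Xs" using g X(2) by simp
    then show ?thesis
    proof (induction g rule: generate.induct)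
      case one then show ?case using hc generate.one[of G "Wk Xs (Suc (Suc k)) \<union> lcs G (Suc (Suc (Suc k)))"] by simp
    next
      case (incl x) then show ?case by (rule base)
    next
      case (inv x) then show ?case using base X(3) by blast
    next
      case (eng g1 g2)
      have c: "g1 \<in> carrier G" "g2 \<in> carrier G" using eng.hyps X generate_in_carrier by blast+
      have "gcomm G (g1 \<otimes> g2) h = g1 \<otimes> gcomm G g2 h \<otimes> inv g1 \<otimes> gcomm G g1 h" by (rule I1[OF c hc])
      then show ?case using Hm Hconj[OF c(1) eng.IH(2)] eng.IH(1) by simp
    qed
  qed
  have main: "gcomm G g h \<in> ?H" if g: "g \<in> carrier G" and h: "h \<in> lcs G (Suc k)" for g h
  proof -
    have "h \<in> generate G (Wk Xs (Suc k) \<union> lcs G (Suc (Suc k)))" using IH h by blast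
    then show ?thesis
    proof (induction h rule: generate.induct)
      case one then show ?case using g generate.one[of G "Wk Xs (Suc (Suc k)) \<union> lcs G (Suc (Suc (Suc k)))"] by simp
    next
      case (incl h) then show ?case using incl_case g by blast
    next
      case (inv h)
      have hc: "h \<in> carrier G"
      proof (cases "h \<in> lcs G (Suc (Suc k))")
        case True then show ?thesis by simp
      next
        case False
        then obtain gs where "h = ic G gs" "set gs \<subseteq> Xs" using inv by (auto simp: Wk_def)
        then show ?thesis using ic_closed X(1) by blast
      qed
      have "gcomm G g (inv h) = inv h \<otimes> inv (gcomm G g h) \<otimes> inv (inv h)" using I4[OF g hc] hc by simp
      moreover have "inv h \<otimes> inv (gcomm G g h) \<otimes> inv (inv h) \<in> ?H"
        by (rule Hconj) (use hc incl_case[OF g inv] Hi in auto)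
      ultimately show ?case by simp
    next
      case (eng h1 h2)
      have hs: "Wk Xs (Suc k) \<union> lcs G (Suc (Suc k)) \<subseteq> carrier G"
      proof
        fix x assume "x \<in> Wk Xs (Suc k) \<union> lcs G (Suc (Suc k))"
        then show "x \<in> carrier G"
        proof
          assume "x \<in> Wk Xs (Suc k)"
          then obtain gs where "x = ic G gs" "set gs \<subseteq> Xs" by (auto simp: Wk_def)
          then show ?thesis using ic_closed X(1) by blast
        qed simp
      qed
      have c: "h1 \<in> carrier G" "h2 \<in> carrier G" using eng.hyps hs generate_in_carrier by blast+
      have "gcomm G g (h1 \<otimes> h2) = gcomm G g h1 \<otimes> (h1 \<otimes> gcomm G g h2 \<otimes> inv h1)" by (rule I2[OF g c])
      then show ?case using Hm Hconj[OF c(1) eng.IH(2)] eng.IH(1) by simp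
    qed
  qed
  show ?thesis unfolding lcs_SS[of k]
    by (rule generate_subgroup_incl[OF _ Hsg]) (use main in blast)
qed

lemma L1:
  assumes X: "Xs \<subseteq> carrier G" "generate G Xs = carrier G" "\<And>x. x \<in> Xs \<Longrightarrow> inv x \<in> Xs"
  shows "lcs G (Suc k) \<subseteq> generate G (Wk Xs (Suc k) \<union> lcs G (Suc (Suc k)))"
proof (induction k)
  case 0
  have "Xs \<subseteq> Wk Xs (Suc 0)"
  proof
    fix x assume "x \<in> Xs" then show "x \<in> Wk Xs (Suc 0)" unfolding Wk_def by (auto intro!: exI[of _ "[x]"])
  qed
  then have "generate G Xs \<subseteq> generate G (Wk Xs (Suc 0) \<union> lcs G (Suc (Suc 0)))"
    by (intro mono_generate) blast
  then show ?case using X(2) by simp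
next
  case (Suc k) show ?case by (rule L1_step[OF X(1,2) X(3) Suc.IH])
qed

end

definition Fv :: "('a, 'b) monoid_scheme \<Rightarrow> (rat \<Rightarrow> 'a \<Rightarrow> 'a) \<Rightarrow> (nat \<Rightarrow> 'a) \<Rightarrow> nat \<Rightarrow> (nat \<Rightarrow> rat) \<Rightarrow> 'a" where
  "Fv G d ys s \<tau> = ic G (map (\<lambda>j. d (\<tau> j) (ys j)) [0..<s])"

locale qsg = group G for G (structure) + fixes d :: "rat \<Rightarrow> 'a \<Rightarrow> 'a"
  assumes qs: "Q_scalable G d"
begin

lemma d_hom: "l \<noteq> 0 \<Longrightarrow> group_hom G G (d l)"
  using qs unfolding Q_scalable_def group_hom_def group_hom_axioms_def
  by (auto intro: iso_imp_homomorphism)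

lemma d_comp: "x \<in> carrier G \<Longrightarrow> d l (d m x) = d (l * m) x"
  using qs unfolding Q_scalable_def by blast

lemma d_zero: "x \<in> carrier G \<Longrightarrow> d 0 x = \<one>"
  using qs unfolding Q_scalable_def by blast

lemma d_closed [simp]: "x \<in> carrier G \<Longrightarrow> d l x \<in> carrier G"
proof (cases "l = 0")
  case True then show "x \<in> carrier G \<Longrightarrow> ?thesis" using d_zero by simp
next
  case False then show "x \<in> carrier G \<Longrightarrow> ?thesis" using group_hom.hom_closed[OF d_hom] by blast
qed

lemma d_mult: "l \<noteq> 0 \<Longrightarrow> x \<in> carrier G \<Longrightarrow> y \<in> carrier G \<Longrightarrow> d l (x \<otimes> y) = d l x \<otimes> d l y"
  using group_hom.hom_mult[OF d_hom] by blast

lemma d_inv: "l \<noteq> 0 \<Longrightarrow> x \<in> carrier G \<Longrightarrow> d l (inv x) = inv (d l x)"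
  using group_hom.hom_inv[OF d_hom] by blast

lemma d_one: "l \<noteq> 0 \<Longrightarrow> d l \<one> = \<one>"
  using group_hom.hom_one[OF d_hom] by blast

lemma d_1: assumes "x \<in> carrier G" shows "d 1 x = x"
proof -
  have inj: "inj_on (d 1) (carrier G)" using qs unfolding Q_scalable_def iso_iff by auto
  have "d 1 (d 1 x) = d 1 x" using d_comp[OF assms, of 1 1] by simp
  then show ?thesis using inj_onD[OF inj] assms by simp
qed

lemma d_gcomm: "l \<noteq> 0 \<Longrightarrow> a \<in> carrier G \<Longrightarrow> b \<in> carrier G \<Longrightarrow> d l (gcomm G a b) = gcomm G (d l a) (d l b)"
  by (simp add: gcomm_def d_mult d_inv)

lemma d_ic: assumes "l \<noteq> 0" shows "set gs \<subseteq> carrier G \<Longrightarrow> d l (ic G gs) = ic G (map (d l) gs)"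
proof (induction gs)
  case Nil then show ?case using d_one[OF assms] by simp
next
  case (Cons g gs)
  show ?case
  proof (cases gs)
    case Nil then show ?thesis by simp
  next
    case (Cons h t)
    then have "d l (ic G (g # gs)) = gcomm G (d l g) (d l (ic G gs))"
      using d_gcomm[OF assms] ic_Cons[of gs g] ic_closed Cons.prems by simp
    also have "\<dots> = ic G (map (d l) (g # gs))"
      using Cons.IH Cons.prems ic_Cons[of "map (d l) gs" "d l g"] \<open>gs = h # t\<close> by simp
    finally show ?thesis .
  qed
qed

end


locale qsf = qsg + fixes s :: nat and ys :: "nat \<Rightarrow> 'a"
  assumes top: "lcs G (Suc s) = {\<one>}" and V: "\<And>j. j < s \<Longrightarrow> ys j \<in> V1 G d"
begin

abbreviation F where "F \<equiv> Fv G d ys s"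

lemma ysc: "j < s \<Longrightarrow> ys j \<in> carrier G"
  using V unfolding V1_def by blast

lemma F_closed [simp]: "F \<tau> \<in> carrier G"
  unfolding Fv_def by (rule ic_closed) (auto simp: ysc)

lemma F_cong: assumes h: "\<And>j. j < s \<Longrightarrow> \<tau> j = \<tau>' j" shows "F \<tau> = F \<tau>'"
proof -
  have "map (\<lambda>j. d (\<tau> j) (ys j)) [0..<s] = map (\<lambda>j. d (\<tau>' j) (ys j)) [0..<s]"
    by (rule map_cong[OF refl]) (simp add: h)
  then show ?thesis unfolding Fv_def by (rule arg_cong)
qed

lemma F_add: assumes "i < s" shows "F (\<tau>(i := t + t')) = F (\<tau>(i := t)) \<otimes> F (\<tau>(i := t'))"
proof -
  have split: "[0..<s] = [0..<i] @ i # [Suc i..<s]"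
    using assms by (metis le0 upt_add_eq_append upt_conv_Cons add_0 le_add_diff_inverse less_imp_le_nat)
  let ?us = "map (\<lambda>j. d (\<tau> j) (ys j)) [0..<i]"
  let ?vs = "map (\<lambda>j. d (\<tau> j) (ys j)) [Suc i..<s]"
  have e: "F (\<tau>(i := x)) = ic G (?us @ d x (ys i) # ?vs)" for x
  proof -
    have 1: "map (\<lambda>j. d ((\<tau>(i := x)) j) (ys j)) [0..<i] = ?us"
      by (rule map_cong[OF refl]) simp
    have 2: "map (\<lambda>j. d ((\<tau>(i := x)) j) (ys j)) [Suc i..<s] = ?vs"
      by (rule map_cong[OF refl]) simp
    show ?thesis unfolding Fv_def split map_append list.map(2) 1 2 by simp
  qed
  have len: "Suc (length ?us + Suc (length ?vs)) = Suc s" using assms by simp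
  have usc: "set ?us \<subseteq> carrier G" using assms ysc by auto
  have vsc: "set ?vs \<subseteq> carrier G" using assms ysc by auto
  have "d (t + t') (ys i) = d t (ys i) \<otimes> d t' (ys i)" using V[OF assms] unfolding V1_def by blast
  then show ?thesis unfolding e
    using M_top[of ?us ?vs, OF _ usc vsc, of "d t (ys i)" "d t' (ys i)"] len top ysc[OF assms] by simp
qed

lemma F_zero: assumes "i < s" shows "F (\<tau>(i := 0)) = \<one>"
proof -
  have "F (\<tau>(i := 0)) = F (\<tau>(i := 0)) \<otimes> F (\<tau>(i := 0))" using F_add[OF assms, of \<tau> 0 0] by simp
  then show ?thesis by simp
qed

lemma F_neg: assumes "i < s" shows "F (\<tau>(i := - t)) = inv F (\<tau>(i := t))"
proof -
  have "F (\<tau>(i := - t)) \<otimes> F (\<tau>(i := t)) = \<one>" using F_add[OF assms, of \<tau> "-t" t] F_zero[OF assms] by simp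
  then show ?thesis by (intro inv_equality[symmetric]) simp_all
qed

lemma F_nat: assumes "i < s" shows "F (\<tau>(i := of_nat n * t)) = F (\<tau>(i := t)) [^] n"
proof (induction n)
  case 0 show ?case by (simp only: of_nat_0 mult_zero_left nat_pow_0 F_zero[OF assms])
next
  case (Suc n)
  have e: "of_nat (Suc n) * t = of_nat n * t + t" by (simp add: distrib_right)
  have "F (\<tau>(i := of_nat (Suc n) * t)) = F (\<tau>(i := of_nat n * t)) \<otimes> F (\<tau>(i := t))"
    unfolding e by (rule F_add[OF assms])
  then show ?case using Suc.IH by (simp only: nat_pow_Suc)
qed

lemma F_int: assumes "i < s" shows "F (\<tau>(i := of_int k * t)) = F (\<tau>(i := t)) [^] k"
proof (cases "k \<ge> 0")
  case True
  obtain n where "k = int n" using nonneg_int_cases[OF True] by blast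
  then show ?thesis using F_nat[OF assms] by (simp only: int_pow_int of_int_of_nat_eq)
next
  case False
  define n where "n = nat (- k)"
  have k: "k = - int n" using False n_def by simp
  have "of_int k * t = - (of_nat n * t)" using k by simp
  then have "F (\<tau>(i := of_int k * t)) = F (\<tau>(i := - (of_nat n * t)))" by (simp only:)
  also have "\<dots> = inv (F (\<tau>(i := t)) [^] n)" by (simp only: F_neg[OF assms] F_nat[OF assms])
  finally show ?thesis using k int_pow_neg_int[OF F_closed] by (simp only:)
qed

lemma F_swap: assumes "i < s" "j < s" "i \<noteq> j"
  shows "F (\<tau>(i := of_int k * x, j := y)) = F (\<tau>(i := x, j := of_int k * y))"
proof -
  have t1: "\<tau>(i := of_int k * x, j := y) = (\<tau>(j := y))(i := of_int k * x)" by (rule fun_upd_twist) (use assms in blast)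
  have t2: "(\<tau>(j := y))(i := x) = (\<tau>(i := x))(j := y)" by (rule fun_upd_twist) (use assms in blast)
  have "F (\<tau>(i := of_int k * x, j := y)) = F ((\<tau>(j := y))(i := of_int k * x))" by (simp only: t1)
  also have "\<dots> = F ((\<tau>(j := y))(i := x)) [^] k" by (rule F_int[OF assms(1)])
  also have "\<dots> = F ((\<tau>(i := x))(j := y)) [^] k" by (simp only: t2)
  also have "\<dots> = F ((\<tau>(i := x))(j := of_int k * y))" by (rule F_int[OF assms(2), symmetric])
  finally show ?thesis .
qed

lemma F_merge: assumes "0 < p" "p < s" shows "F \<tau> = F (\<tau>(0 := \<tau> 0 * \<tau> p, p := 1))"
proof -
  obtain a b where q: "quotient_of (\<tau> p) = (a, b)" by force
  have b: "b > 0" using quotient_of_denom_pos[OF q] .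
  have bq: "(of_int b :: rat) \<noteq> 0" using b by simp
  have tp: "\<tau> p = of_int a * (1 / of_int b)" using quotient_of_div[OF q] by simp
  let ?c = "\<tau> 0"
  have s0: "0 < s" using assms by simp
  have p0: "p \<noteq> 0" "0 \<noteq> p" using assms by simp_all
  have e1: "\<tau> = \<tau>(p := of_int a * (1 / of_int b), 0 := ?c)" by (simp only: tp[symmetric] fun_upd_triv)
  have e2: "\<tau>(p := 1 / of_int b, 0 := of_int a * ?c) = \<tau>(0 := of_int b * (of_int a * ?c / of_int b), p := 1 / of_int b)"
  proof -
    have "of_int b * (of_int a * ?c / of_int b) = of_int a * ?c" using bq by simp
    then show ?thesis using fun_upd_twist[OF p0(1)] by metis
  qed
  have e3: "\<tau>(0 := of_int a * ?c / of_int b, p := of_int b * (1 / of_int b)) = \<tau>(0 := ?c * \<tau> p, p := 1)"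
  proof -
    have "of_int b * (1 / of_int b) = (1::rat)" using bq by simp
    moreover have "of_int a * ?c / of_int b = ?c * \<tau> p" using tp by simp
    ultimately show ?thesis by (simp only:)
  qed
  have "F \<tau> = F (\<tau>(p := of_int a * (1 / of_int b), 0 := ?c))" by (subst e1) (rule refl)
  also have "\<dots> = F (\<tau>(p := 1 / of_int b, 0 := of_int a * ?c))"
    by (rule F_swap[OF assms(2) s0 p0(1)])
  also have "\<dots> = F (\<tau>(0 := of_int b * (of_int a * ?c / of_int b), p := 1 / of_int b))"
    by (simp only: e2)
  also have "\<dots> = F (\<tau>(0 := of_int a * ?c / of_int b, p := of_int b * (1 / of_int b)))"
    by (rule F_swap[OF s0 assms(2) p0(2)])
  also have "\<dots> = F (\<tau>(0 := ?c * \<tau> p, p := 1))" by (simp only: e3)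
  finally show ?thesis .
qed

lemma prod_one_rest: fixes n :: nat assumes "0 < n" "\<And>j. 0 < j \<Longrightarrow> j < n \<Longrightarrow> f j = (1::rat)"
  shows "(\<Prod>j<n. f j) = f 0"
proof -
  obtain n' where n: "n = Suc n'" using assms(1) by (cases n) auto
  have "(\<Prod>j<n. f j) = f 0 * (\<Prod>j<n'. f (Suc j))" unfolding n by (rule prod.lessThan_Suc_shift)
  also have "(\<Prod>j<n'. f (Suc j)) = 1" by (rule prod.neutral) (use assms n in auto)
  finally show ?thesis by simp
qed

lemma prod_merge: fixes n p :: nat assumes "0 < p" "p < n"
  shows "(\<Prod>j<n. (\<tau>(0 := \<tau> 0 * \<tau> p, p := 1)) j) = (\<Prod>j<n. (\<tau> j :: rat))"
proof -
  let ?t = "\<tau>(0 := \<tau> 0 * \<tau> p, p := 1)"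
  let ?B = "{..<n} - {0} - {p}"
  have f: "finite ({..<n} - {0})" by simp
  have in0: "0 \<in> {..<n}" and inp: "p \<in> {..<n} - {0}" using assms by auto
  have r: "prod f {..<n} = f 0 * (f p * prod f ?B)" for f :: "nat \<Rightarrow> rat"
    using prod.remove[OF finite_lessThan in0, of f] prod.remove[OF f inp, of f] by (simp del: Diff_iff)
  have c: "prod ?t ?B = prod \<tau> ?B" by (rule prod.cong) auto
  have "?t 0 = \<tau> 0 * \<tau> p" "?t p = 1" using assms by auto
  then show ?thesis using r[of ?t] r[of \<tau>] c by simp
qed

lemma F_collapse_aux:
  "(\<forall>j. p \<le> j \<longrightarrow> j < s \<longrightarrow> 0 < j \<longrightarrow> \<tau> j = 1) \<Longrightarrow> 0 < s \<Longrightarrow>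
    F \<tau> = F (\<lambda>j. if j = 0 then (\<Prod>j<s. \<tau> j) else 1)"
proof (induction p arbitrary: \<tau>)
  case 0
  have "(\<Prod>j<s. \<tau> j) = \<tau> 0" by (rule prod_one_rest) (use 0 in auto)
  then show ?case by (intro F_cong) (use 0 in auto)
next
  case (Suc p)
  show ?case
  proof (cases "p = 0 \<or> s \<le> p")
    case True
    have "\<tau> j = 1" if "p \<le> j" "j < s" "0 < j" for j
    proof -
      have "Suc p \<le> j" using True that by auto
      then show ?thesis using Suc.prems(1) that by blast
    qed
    then have "\<forall>j. p \<le> j \<longrightarrow> j < s \<longrightarrow> 0 < j \<longrightarrow> \<tau> j = 1" by blast
    then show ?thesis using Suc.IH Suc.prems(2) by blast
  next
    case False
    then have p: "0 < p" "p < s" by auto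
    let ?t = "\<tau>(0 := \<tau> 0 * \<tau> p, p := 1)"
    have "?t j = 1" if "p \<le> j" "j < s" "0 < j" for j
    proof (cases "j = p")
      case True then show ?thesis by simp
    next
      case False
      then have "Suc p \<le> j" using that by simp
      then have "\<tau> j = 1" using Suc.prems(1) that by blast
      then show ?thesis using False that by simp
    qed
    then have "\<forall>j. p \<le> j \<longrightarrow> j < s \<longrightarrow> 0 < j \<longrightarrow> ?t j = 1" by blast
    then have "F ?t = F (\<lambda>j. if j = 0 then (\<Prod>j<s. ?t j) else 1)" using Suc.IH Suc.prems(2) by blast
    also have "(\<Prod>j<s. ?t j) = (\<Prod>j<s. \<tau> j)" by (rule prod_merge[OF p])
    finally show ?thesis by (rule trans[OF F_merge[OF p]])
  qed
qed

lemma F_collapse: "0 < s \<Longrightarrow> F \<tau> = F (\<lambda>j. if j = 0 then (\<Prod>j<s. \<tau> j) else 1)"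
  by (rule F_collapse_aux[of s]) auto

lemma F_d: assumes "l \<noteq> 0" shows "d l (F \<tau>) = F (\<lambda>j. l * \<tau> j)"
proof -
  have sc: "set (map (\<lambda>j. d (\<tau> j) (ys j)) [0..<s]) \<subseteq> carrier G" using ysc by auto
  have "map (d l) (map (\<lambda>j. d (\<tau> j) (ys j)) [0..<s]) = map (\<lambda>j. d (l * \<tau> j) (ys j)) [0..<s]"
    by (auto simp: d_comp ysc)
  then show ?thesis unfolding Fv_def d_ic[OF assms sc] by (rule arg_cong)
qed

lemma F_sigma: assumes "2 \<le> s" shows "F \<tau> = sigma G d s (\<Prod>j<s. \<tau> j) (F (\<lambda>_. 1))"
proof -
  let ?q = "\<Prod>j<s. \<tau> j"
  obtain n m where q: "quotient_of ?q = (n, m)" by force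
  have m: "m > 0" using quotient_of_denom_pos[OF q] .
  have mq: "(of_int m :: rat) \<noteq> 0" using m by simp
  have qv: "?q = of_int n / of_int m" using quotient_of_div[OF q] .
  define N where "N = n * m ^ (s - 1)"
  have s0: "0 < s" using assms by simp
  have sig: "sigma G d s ?q (F (\<lambda>_. 1)) = d (1 / of_int m) (F (\<lambda>_. 1) [^] N)"
    using assms q by (simp add: sigma_def N_def)
  have "(\<lambda>_::nat. (1::rat))(0 := 1) = (\<lambda>_. 1)" by (rule ext) simp
  then have "F (\<lambda>_. 1) [^] N = F ((\<lambda>_. 1)(0 := 1)) [^] N" by (simp only:)
  also have "\<dots> = F ((\<lambda>_. 1)(0 := of_int N * 1))" by (rule F_int[OF s0, symmetric])
  finally have p: "F (\<lambda>_. 1) [^] N = F ((\<lambda>_. 1)(0 := of_int N))" by simp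
  let ?u = "\<lambda>j. 1 / of_int m * ((\<lambda>_. 1)(0 := (of_int N :: rat))) j"
  have "d (1 / of_int m) (F ((\<lambda>_. 1)(0 := of_int N))) = F ?u" by (rule F_d) (use mq in simp)
  also have "\<dots> = F (\<lambda>j. if j = 0 then (\<Prod>j<s. ?u j) else 1)" by (rule F_collapse[OF s0])
  also have "(\<Prod>j<s. ?u j) = ?q"
  proof -
    have "(\<Prod>j<s. ?u j) = (1 / of_int m) ^ s * (\<Prod>j<s. ((\<lambda>_. 1)(0 := (of_int N :: rat))) j)"
      by (simp only: prod.distrib prod_constant card_lessThan)
    also have "(\<Prod>j<s. ((\<lambda>_. 1)(0 := (of_int N :: rat))) j) = of_int N"
      by (subst prod_one_rest[OF s0]) auto
    also have "(1 / of_int m) ^ s * (of_int N :: rat) = of_int n / of_int m"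
    proof -
      obtain s' where s': "s = Suc s'" using s0 by (cases s) auto
      show ?thesis unfolding N_def s' using mq by (simp add: field_simps)
    qed
    finally show ?thesis using qv by simp
  qed
  finally have "d (1 / of_int m) (F ((\<lambda>_. 1)(0 := of_int N))) = F (\<lambda>j. if j = 0 then ?q else 1)" .
  then show ?thesis using sig p F_collapse[OF s0, of \<tau>] by simp
qed

lemma F_sigma_all: assumes "1 \<le> s" shows "F \<tau> = sigma G d s (\<Prod>j<s. \<tau> j) (F (\<lambda>_. 1))"
proof (cases "s = 1")
  case True
  have y0: "ys 0 \<in> carrier G" using ysc True by simp
  have "F \<tau> = d (\<tau> 0) (ys 0)" unfolding Fv_def True by simp
  moreover have "F (\<lambda>_. 1) = d 1 (ys 0)" unfolding Fv_def True by simp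
  ultimately show ?thesis using True y0 d_comp[OF y0, of "\<tau> 0" 1] by (simp add: sigma_def)
next
  case False then show ?thesis by (intro F_sigma) (use assms in simp)
qed

lemma F_inv: assumes "0 < s" shows "inv (F \<tau>) = F (\<tau>(0 := - \<tau> 0))"
  using F_neg[OF assms, of \<tau> "\<tau> 0"] by (simp only: fun_upd_triv)

end


lemma foldr_prod:
  assumes grp: "group G" and gc: "\<And>q b. b \<in> B \<Longrightarrow> g q b \<in> carrier G"
  shows "snd ` set l \<subseteq> B \<Longrightarrow> a \<in> carrier G \<Longrightarrow>
    foldr (\<lambda>(q, b) acc. g q b \<otimes>\<^bsub>G\<^esub> acc) l a = foldr (\<lambda>(q, b) acc. g q b \<otimes>\<^bsub>G\<^esub> acc) l \<one>\<^bsub>G\<^esub> \<otimes>\<^bsub>G\<^esub> a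
     \<and> foldr (\<lambda>(q, b) acc. g q b \<otimes>\<^bsub>G\<^esub> acc) l \<one>\<^bsub>G\<^esub> \<in> carrier G"
proof (induction l)
  case Nil then show ?case using grp by (simp add: group.is_monoid monoid.l_one)
next
  case (Cons p l)
  obtain q b where p: "p = (q, b)" by force
  have b: "b \<in> B" using Cons.prems p by auto
  have IH: "foldr (\<lambda>(q, b) acc. g q b \<otimes>\<^bsub>G\<^esub> acc) l a = foldr (\<lambda>(q, b) acc. g q b \<otimes>\<^bsub>G\<^esub> acc) l \<one>\<^bsub>G\<^esub> \<otimes>\<^bsub>G\<^esub> a"
     "foldr (\<lambda>(q, b) acc. g q b \<otimes>\<^bsub>G\<^esub> acc) l \<one>\<^bsub>G\<^esub> \<in> carrier G"
    using Cons by auto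
  then show ?case using p gc[OF b] Cons.prems(2) grp
    by (simp add: group.is_monoid monoid.m_assoc monoid.m_closed)
qed

lemma (in qsg) main_qsg:
  fixes s r :: nat and x :: "nat \<Rightarrow> 'a"
  assumes "nilpotent_step G s"
    and "\<forall>i\<in>{1..r}. x i \<in> V1 G d"
    and "generate G {d q (x i) | q i. i \<in> {1..r}} = carrier G"
  shows "finite_dim_sigma G d s"
proof -
  have grp: "group G" by (rule is_group)
  let ?X = "{d q (x i) | q i. i \<in> {1..r}}"
  have xc: "x i \<in> carrier G" if "i \<in> {1..r}" for i using assms(2) that unfolding V1_def by blast
  have Xc: "?X \<subseteq> carrier G" using xc by auto
  have Xinv: "inv y \<in> ?X" if yX: "y \<in> ?X" for y
  proof -
    obtain q i where y: "y = d q (x i)" "i \<in> {1..r}" using yX by blast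
    have "d (- q + q) (x i) = d (- q) (x i) \<otimes> d q (x i)" using assms(2) y(2) unfolding V1_def by blast
    then have "d (- q) (x i) \<otimes> d q (x i) = \<one>" using d_zero[OF xc[OF y(2)]] by simp
    then have "inv y = d (- q) (x i)" unfolding y(1) by (rule inv_equality) (use xc y in simp_all)
    then show ?thesis using y(2) by blast
  qed
  have s1: "1 \<le> s" and top: "lcs G (Suc s) = {\<one>}" using assms(1) unfolding nilpotent_step_def by simp_all
  obtain s' where s': "s = Suc s'" using s1 by (cases s) auto
  have gen: "lcs G s \<subseteq> generate G (Wk ?X s \<union> {\<one>})"
    using L1[OF Xc assms(3) Xinv, of s'] top s' by simp
  define B where "B = ic G ` {zs. set zs \<subseteq> x ` {1..r} \<and> length zs = s}"
  have finB: "finite B" unfolding B_def by (intro finite_imageI finite_lists_length_eq) simp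
  have Bl: "B \<subseteq> lcs G s"
  proof
    fix b assume "b \<in> B"
    then obtain zs where zs: "b = ic G zs" "set zs \<subseteq> x ` {1..r}" "length zs = s" unfolding B_def by blast
    have "set zs \<subseteq> carrier G" using zs xc by blast
    then show "b \<in> lcs G s" using ic_lcs zs by blast
  qed
  have Bc: "B \<subseteq> carrier G" using Bl lcs_carrier by blast
  let ?S = "\<lambda>q b. sigma G d s q b"
  have Sc: "?S q b \<in> carrier G" if "b \<in> B" for q b
    using that Bc by (auto simp: sigma_def split: prod.split)
  have K: "(\<exists>q. \<exists>b\<in>B. w = ?S q b) \<and> (\<exists>q. \<exists>b\<in>B. inv w = ?S q b)" if w: "w \<in> Wk ?X s" for w
  proof -
    obtain gs where gs: "w = ic G gs" "length gs = s" "set gs \<subseteq> ?X" using w unfolding Wk_def by blast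
    have "\<forall>j. \<exists>p. j < s \<longrightarrow> gs ! j = d (fst p) (x (snd p)) \<and> snd p \<in> {1..r}"
    proof
      fix j show "\<exists>p. j < s \<longrightarrow> gs ! j = d (fst p) (x (snd p)) \<and> snd p \<in> {1..r}"
      proof (cases "j < s")
        case True
        then have "gs ! j \<in> ?X" using gs nth_mem by blast
        then obtain q i where "gs ! j = d q (x i)" "i \<in> {1..r}" by blast
        then show ?thesis by (intro exI[of _ "(q, i)"]) simp
      qed simp
    qed
    then obtain P where P: "\<And>j. j < s \<Longrightarrow> gs ! j = d (fst (P j)) (x (snd (P j))) \<and> snd (P j) \<in> {1..r}"
      by metis
    define \<tau> where "\<tau> = (\<lambda>j. fst (P j))"
    define ys where "ys = (\<lambda>j. x (snd (P j)))"
    interpret qsf G d s ys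
    proof
      show "lcs G (Suc s) = {\<one>}" by (rule top)
      fix j assume "j < s" then show "ys j \<in> V1 G d" using P assms(2) unfolding ys_def by blast
    qed
    have gsm: "gs = map (\<lambda>j. d (\<tau> j) (ys j)) [0..<s]"
      by (rule nth_equalityI) (use gs P in \<open>auto simp: \<tau>_def ys_def\<close>)
    have wF: "w = Fv G d ys s \<tau>" unfolding Fv_def gs(1) gsm ..
    have bB: "Fv G d ys s (\<lambda>_. 1) \<in> B"
    proof -
      have "map (\<lambda>j. d 1 (ys j)) [0..<s] = map ys [0..<s]"
        by (rule map_cong[OF refl]) (use d_1 ysc in auto)
      moreover have "set (map ys [0..<s]) \<subseteq> x ` {1..r}" using P unfolding ys_def by auto
      ultimately show ?thesis unfolding Fv_def B_def by auto
    qed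
    have "w = ?S (\<Prod>j<s. \<tau> j) (Fv G d ys s (\<lambda>_. 1))" unfolding wF by (rule F_sigma_all[OF s1])
    moreover have "inv w = ?S (\<Prod>j<s. (\<tau>(0 := - \<tau> 0)) j) (Fv G d ys s (\<lambda>_. 1))"
      unfolding wF F_inv[OF s1[unfolded One_nat_def Suc_le_eq]] by (rule F_sigma_all[OF s1])
    ultimately show ?thesis using bB by blast
  qed
  let ?f = "\<lambda>(q, b) acc. ?S q b \<otimes> acc"
  let ?R = "{z. \<exists>l :: (rat \<times> 'a) list. snd ` set l \<subseteq> B \<and> z = foldr ?f l \<one>}"
  have FP: "foldr ?f l a = foldr ?f l \<one> \<otimes> a \<and> foldr ?f l \<one> \<in> carrier G"
    if "snd ` set l \<subseteq> B" "a \<in> carrier G" for l a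
    using foldr_prod[OF grp, of B ?S, OF Sc that] by simp
  have single: "?S q b \<in> ?R" if "b \<in> B" for q b
  proof -
    have "foldr ?f [(q, b)] \<one> = ?S q b" using Sc[OF that] by simp
    then show ?thesis using that by (intro CollectI exI[of _ "[(q, b)]"]) auto
  qed
  have R1: "\<one> \<in> ?R" by (intro CollectI exI[of _ "[]"]) simp
  have Rw: "h \<in> ?R" "inv h \<in> ?R" if "h \<in> Wk ?X s \<union> {\<one>}" for h
  proof -
    have "h \<in> ?R \<and> inv h \<in> ?R"
    proof (cases "h \<in> Wk ?X s")
      case True
      obtain q b where qb: "b \<in> B" "h = ?S q b" using K[OF True] by blast
      obtain q' b' where qb': "b' \<in> B" "inv h = ?S q' b'" using K[OF True] by blast
      show ?thesis using single[OF qb(1), of q] single[OF qb'(1), of q'] qb qb' by simp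
    next
      case False
      then have "h = \<one>" using that by blast
      then show ?thesis using R1 by simp
    qed
    then show "h \<in> ?R" "inv h \<in> ?R" by blast+
  qed
  have genR: "z \<in> ?R" if "z \<in> generate G (Wk ?X s \<union> {\<one>})" for z
    using that
  proof (induction z rule: generate.induct)
    case one then show ?case by (rule R1)
  next
    case (incl h) then show ?case by (rule Rw(1))
  next
    case (inv h) then show ?case by (rule Rw(2))
  next
    case (eng h1 h2)
    obtain l1 where l1: "snd ` set l1 \<subseteq> B" "h1 = foldr ?f l1 \<one>" using eng.IH(1) by blast
    obtain l2 where l2: "snd ` set l2 \<subseteq> B" "h2 = foldr ?f l2 \<one>" using eng.IH(2) by blast
    have c2: "foldr ?f l2 \<one> \<in> carrier G" using FP[OF l2(1)] by blast
    have e1: "foldr ?f (l1 @ l2) \<one> = foldr ?f l1 (foldr ?f l2 \<one>)" by (rule foldr_append)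
    have e2: "foldr ?f l1 (foldr ?f l2 \<one>) = foldr ?f l1 \<one> \<otimes> foldr ?f l2 \<one>" using FP[OF l1(1) c2] by blast
    have "h1 \<otimes> h2 = foldr ?f (l1 @ l2) \<one>" unfolding e1 e2 l1(2) l2(2) ..
    moreover have "snd ` set (l1 @ l2) \<subseteq> B" using l1(1) l2(1) by auto
    ultimately show ?case by blast
  qed
  show ?thesis unfolding finite_dim_sigma_def
    using finB Bl gen genR by blast
qed


theorem mainTheorem6:
  fixes G :: "('a, 'b) monoid_scheme" and \<delta> :: "rat \<Rightarrow> 'a \<Rightarrow> 'a"
    and s r :: nat and x :: "nat \<Rightarrow> 'a"
  assumes "Q_scalable G \<delta>"
    and "nilpotent_step G s"
    and "\<forall>i\<in>{1..r}. x i \<in> V1 G \<delta>"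
    and "generate G {\<delta> q (x i) | q i. i \<in> {1..r}} = carrier G"
  shows "finite_dim_sigma G \<delta> s"
proof -
  have grp: "group G" using assms(1) unfolding Q_scalable_def by blast
  interpret qsg G \<delta> using grp assms(1) by (simp add: qsg_def qsg_axioms_def)
  show ?thesis by (rule main_qsg[OF assms(2-4)])
qed

end
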